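(* Let $G$ be a modular noetherian right $\ell$-group with strong order unit $s$ and degree homomorphism $\deg$. Let $d \geq 1$, and let $g \in G^-$ be $d$-homogeneous with right-normal factorization $g = g_k g_{k-1}\cdots g_1$. Then this factorization is also left-normal. That is, the sequence $h_i := g_{k+1-i}$ ($1 \leq i \leq k$) is the left-normal factorization $g = h_1 h_2 \cdots h_k$.
   Context: A right $\ell$-group is a group $G$ (identity $e$) with a right-invariant partial order making $G$ a lattice. It is modular if the lattice is modular. It is noetherian if for each $g$ the set $\{h \geq g\}$ satisfies the descending chain condition and the set $\{h \leq g\}$ satisfies the ascending chain condition. $G^- = \{g \leq e\}$ and $[a,b] = \{x : a\leq x\leq b\}$. A strong order unit is an element $s > e$ such that $x \mapsto sx$ is a lattice automorphism and every $g$ satisfies $g \leq s^k$ for some $k \in \mathbb{Z}$. $\deg : G \to \mathbb{Z}$ is the unique group homomorphism sending $g \in G^-$ to the common length of its factorizations into elements covered by $e$. A right-normal factorization of $g \in G^-$ is a sequence $g_1,\dots,g_k \in [s^{-1},e] \setminus \{e\}$ with $g = g_k\cdots g_1$ such that, for $1 \leq i < k$, there are no $h,h' \in G^-$ with $h\neq e$, $h'h = g_{i+1}$, $hg_i \in [s^{-1},e]$. It exists and is unique. A left-normal factorization of $g$ is a sequence $h_1,\dots,h_k \in [s^{-1},e]\setminus\{e\}$ with $g = h_1\cdots h_k$ such that, for $1 \leq i<k$, there are no $h,h' \in G^-$ with $h \neq e$, $hh' = h_{i+1}$, $h_ih \in [s^{-1},e]$. The element $g$ is $d$-homogeneous if every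 factor $g_i$ of its right-normal factorization satisfies $\deg(g_i) = d$. *)

theory Defs
  imports "HOL-Algebra.Group"
begin

definition lt_rel :: "('a \<Rightarrow> 'a \<Rightarrow> bool) \<Rightarrow> 'a \<Rightarrow> 'a \<Rightarrow> bool" where
  "lt_rel leq x y \<longleftrightarrow> leq x y \<and> x \<noteq> y"

definition is_join :: "('a, 'b) monoid_scheme \<Rightarrow> ('a \<Rightarrow> 'a \<Rightarrow> bool) \<Rightarrow> 'a \<Rightarrow> 'a \<Rightarrow> 'a \<Rightarrow> bool" where
  "is_join G leq x y z \<longleftrightarrow> z \<in> carrier G \<and> leq x z \<and> leq y z \<and>
     (\<forall>w\<in>carrier G. leq x w \<and> leq y w \<longrightarrow> leq z w)"

definition is_meet :: "('a, 'b) monoid_scheme \<Rightarrow> ('a \<Rightarrow> 'a \<Rightarrow> bool) \<Rightarrow> 'a \<Rightarrow> 'a \<Rightarrow> 'a \<Rightarrow> bool" where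
  "is_meet G leq x y z \<longleftrightarrow> z \<in> carrier G \<and> leq z x \<and> leq z y \<and>
     (\<forall>w\<in>carrier G. leq w x \<and> leq w y \<longrightarrow> leq w z)"

definition ljoin :: "('a, 'b) monoid_scheme \<Rightarrow> ('a \<Rightarrow> 'a \<Rightarrow> bool) \<Rightarrow> 'a \<Rightarrow> 'a \<Rightarrow> 'a" where
  "ljoin G leq x y = (THE z. is_join G leq x y z)"

definition lmeet :: "('a, 'b) monoid_scheme \<Rightarrow> ('a \<Rightarrow> 'a \<Rightarrow> bool) \<Rightarrow> 'a \<Rightarrow> 'a \<Rightarrow> 'a" where
  "lmeet G leq x y = (THE z. is_meet G leq x y z)"

definition right_lgroup :: "('a, 'b) monoid_scheme \<Rightarrow> ('a \<Rightarrow> 'a \<Rightarrow> bool) \<Rightarrow> bool" where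
  "right_lgroup G leq \<longleftrightarrow> group G \<and>
     (\<forall>x\<in>carrier G. leq x x) \<and>
     (\<forall>x\<in>carrier G. \<forall>y\<in>carrier G. leq x y \<and> leq y x \<longrightarrow> x = y) \<and>
     (\<forall>x\<in>carrier G. \<forall>y\<in>carrier G. \<forall>z\<in>carrier G. leq x y \<and> leq y z \<longrightarrow> leq x z) \<and>
     (\<forall>x\<in>carrier G. \<forall>y\<in>carrier G. \<forall>z\<in>carrier G. leq x y \<longrightarrow> leq (x \<otimes>\<^bsub>G\<^esub> z) (y \<otimes>\<^bsub>G\<^esub> z)) \<and>
     (\<forall>x\<in>carrier G. \<forall>y\<in>carrier G. (\<exists>z. is_join G leq x y z) \<and> (\<exists>z. is_meet G leq x y z))"

definition modular_lgroup :: "('a, 'b) monoid_scheme \<Rightarrow> ('a \<Rightarrow> 'a \<Rightarrow> bool) \<Rightarrow> bool" where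
  "modular_lgroup G leq \<longleftrightarrow>
     (\<forall>x\<in>carrier G. \<forall>y\<in>carrier G. \<forall>z\<in>carrier G. leq x z \<longrightarrow>
        ljoin G leq x (lmeet G leq y z) = lmeet G leq (ljoin G leq x y) z)"

definition noetherian_lgroup :: "('a, 'b) monoid_scheme \<Rightarrow> ('a \<Rightarrow> 'a \<Rightarrow> bool) \<Rightarrow> bool" where
  "noetherian_lgroup G leq \<longleftrightarrow> (\<forall>g\<in>carrier G.
     \<not> (\<exists>f :: nat \<Rightarrow> 'a. \<forall>n. f n \<in> carrier G \<and> leq g (f n) \<and> lt_rel leq (f (Suc n)) (f n)) \<and>
     \<not> (\<exists>f :: nat \<Rightarrow> 'a. \<forall>n. f n \<in> carrier G \<and> leq (f n) g \<and> lt_rel leq (f n) (f (Suc n))))"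

definition strong_order_unit :: "('a, 'b) monoid_scheme \<Rightarrow> ('a \<Rightarrow> 'a \<Rightarrow> bool) \<Rightarrow> 'a \<Rightarrow> bool" where
  "strong_order_unit G leq s \<longleftrightarrow> s \<in> carrier G \<and> lt_rel leq \<one>\<^bsub>G\<^esub> s \<and>
     bij_betw (\<lambda>x. s \<otimes>\<^bsub>G\<^esub> x) (carrier G) (carrier G) \<and>
     (\<forall>x\<in>carrier G. \<forall>y\<in>carrier G.
        s \<otimes>\<^bsub>G\<^esub> ljoin G leq x y = ljoin G leq (s \<otimes>\<^bsub>G\<^esub> x) (s \<otimes>\<^bsub>G\<^esub> y) \<and>
        s \<otimes>\<^bsub>G\<^esub> lmeet G leq x y = lmeet G leq (s \<otimes>\<^bsub>G\<^esub> x) (s \<otimes>\<^bsub>G\<^esub> y)) \<and>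
     (\<forall>g\<in>carrier G. \<exists>k::int. leq g (s [^]\<^bsub>G\<^esub> k))"

definition neg_cone :: "('a, 'b) monoid_scheme \<Rightarrow> ('a \<Rightarrow> 'a \<Rightarrow> bool) \<Rightarrow> 'a set" where
  "neg_cone G leq = {x \<in> carrier G. leq x \<one>\<^bsub>G\<^esub>}"

definition interval :: "('a, 'b) monoid_scheme \<Rightarrow> ('a \<Rightarrow> 'a \<Rightarrow> bool) \<Rightarrow> 'a \<Rightarrow> 'a \<Rightarrow> 'a set" where
  "interval G leq a b = {x \<in> carrier G. leq a x \<and> leq x b}"

definition covered_by :: "('a, 'b) monoid_scheme \<Rightarrow> ('a \<Rightarrow> 'a \<Rightarrow> bool) \<Rightarrow> 'a \<Rightarrow> 'a \<Rightarrow> bool" where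
  "covered_by G leq x y \<longleftrightarrow> x \<in> carrier G \<and> y \<in> carrier G \<and> lt_rel leq x y \<and>
     \<not> (\<exists>c\<in>carrier G. lt_rel leq x c \<and> lt_rel leq c y)"

definition lprod :: "('a, 'b) monoid_scheme \<Rightarrow> 'a list \<Rightarrow> 'a" where
  "lprod G xs = foldr (\<lambda>x acc. x \<otimes>\<^bsub>G\<^esub> acc) xs \<one>\<^bsub>G\<^esub>"

definition is_degree :: "('a, 'b) monoid_scheme \<Rightarrow> ('a \<Rightarrow> 'a \<Rightarrow> bool) \<Rightarrow> ('a \<Rightarrow> int) \<Rightarrow> bool" where
  "is_degree G leq deg \<longleftrightarrow>
     (\<forall>x\<in>carrier G. \<forall>y\<in>carrier G. deg (x \<otimes>\<^bsub>G\<^esub> y) = deg x + deg y) \<and>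
     (\<forall>g\<in>neg_cone G leq. \<forall>as. (\<forall>a\<in>set as. covered_by G leq a \<one>\<^bsub>G\<^esub>) \<and> lprod G as = g
        \<longrightarrow> deg g = int (length as))"

text \<open>Right-normal factorization: gs = [g_1,...,g_k] with g = g_k ... g_1.\<close>
definition right_normal :: "('a, 'b) monoid_scheme \<Rightarrow> ('a \<Rightarrow> 'a \<Rightarrow> bool) \<Rightarrow> 'a \<Rightarrow> 'a \<Rightarrow> 'a list \<Rightarrow> bool" where
  "right_normal G leq s g gs \<longleftrightarrow>
     (\<forall>x\<in>set gs. x \<in> interval G leq (inv\<^bsub>G\<^esub> s) \<one>\<^bsub>G\<^esub> - {\<one>\<^bsub>G\<^esub>}) \<and>
     g = lprod G (rev gs) \<and>
     (\<forall>i. Suc i < length gs \<longrightarrow>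
        \<not> (\<exists>h\<in>neg_cone G leq. \<exists>h'\<in>neg_cone G leq. h \<noteq> \<one>\<^bsub>G\<^esub> \<and>
             h' \<otimes>\<^bsub>G\<^esub> h = gs ! Suc i \<and>
             h \<otimes>\<^bsub>G\<^esub> (gs ! i) \<in> interval G leq (inv\<^bsub>G\<^esub> s) \<one>\<^bsub>G\<^esub>))"

definition left_normal :: "('a, 'b) monoid_scheme \<Rightarrow> ('a \<Rightarrow> 'a \<Rightarrow> bool) \<Rightarrow> 'a \<Rightarrow> 'a \<Rightarrow> 'a list \<Rightarrow> bool" where
  "left_normal G leq s g hs \<longleftrightarrow>
     (\<forall>x\<in>set hs. x \<in> interval G leq (inv\<^bsub>G\<^esub> s) \<one>\<^bsub>G\<^esub> - {\<one>\<^bsub>G\<^esub>}) \<and>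
     g = lprod G hs \<and>
     (\<forall>i. Suc i < length hs \<longrightarrow>
        \<not> (\<exists>h\<in>neg_cone G leq. \<exists>h'\<in>neg_cone G leq. h \<noteq> \<one>\<^bsub>G\<^esub> \<and>
             h \<otimes>\<^bsub>G\<^esub> h' = hs ! Suc i \<and>
             (hs ! i) \<otimes>\<^bsub>G\<^esub> h \<in> interval G leq (inv\<^bsub>G\<^esub> s) \<one>\<^bsub>G\<^esub>))"

definition homogeneous :: "('a, 'b) monoid_scheme \<Rightarrow> ('a \<Rightarrow> 'a \<Rightarrow> bool) \<Rightarrow> 'a \<Rightarrow> ('a \<Rightarrow> int) \<Rightarrow> int \<Rightarrow> 'a \<Rightarrow> bool" where
  "homogeneous G leq s deg d g \<longleftrightarrow>
     (\<forall>gs. right_normal G leq s g gs \<longrightarrow> (\<forall>x\<in>set gs. deg x = d))"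

end

theory Submission imports Defs begin

lemma chain_induct:
  assumes nochain: "\<not>(\<exists>f::nat \<Rightarrow> 'a. \<forall>n. f n \<in> S \<and> R (f (Suc n)) (f n))"
    and step: "\<And>x. x \<in> S \<Longrightarrow> (\<And>y. y \<in> S \<Longrightarrow> R y x \<Longrightarrow> P y) \<Longrightarrow> P x"
    and x: "x \<in> S"
  shows "P x"
proof (rule ccontr)
  assume nP: "\<not> P x"
  let ?T = "{x\<in>S. \<not> P x}"
  have "\<forall>z\<in>?T. \<exists>y\<in>?T. R y z" using step by blast
  then obtain F where F: "\<forall>z\<in>?T. F z \<in> ?T \<and> R (F z) z" by metis
  define f where "f n = (F ^^ n) x" for n
  have fT: "f n \<in> ?T" for n
    by (induct n) (use F x nP in \<open>auto simp: f_def\<close>)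
  have "\<forall>n. f n \<in> S \<and> R (f (Suc n)) (f n)" using fT F by (auto simp: f_def)
  with nochain show False by blast
qed

lemma exists_max:
  assumes nochain: "\<not>(\<exists>f::nat \<Rightarrow> 'a. \<forall>n. f n \<in> S' \<and> R (f n) (f (Suc n)))"
    and sub: "T \<subseteq> S'" and x: "x \<in> T"
  shows "\<exists>m\<in>T. \<forall>z\<in>T. \<not> R m z"
proof -
  have nc: "\<not>(\<exists>f::nat \<Rightarrow> 'a. \<forall>n. f n \<in> T \<and> (\<lambda>y x. R x y) (f (Suc n)) (f n))"
    using nochain sub by blast
  show ?thesis
    by (rule chain_induct[OF nc _ x]) blast
qed

locale rlg =
  fixes G (structure) and leq :: "'a \<Rightarrow> 'a \<Rightarrow> bool"
  assumes RL: "right_lgroup G leq"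

sublocale rlg \<subseteq> group G using RL unfolding right_lgroup_def by blast

context rlg begin

abbreviation jn where "jn \<equiv> ljoin G leq"
abbreviation mt where "mt \<equiv> lmeet G leq"
abbreviation lt where "lt \<equiv> lt_rel leq"

lemma RLc1: "\<forall>x\<in>carrier G. leq x x"
  using RL unfolding right_lgroup_def by (elim conjE) assumption
lemma RLc2: "\<forall>x\<in>carrier G. \<forall>y\<in>carrier G. leq x y \<and> leq y x \<longrightarrow> x = y"
  using RL unfolding right_lgroup_def by (elim conjE) assumption
lemma RLc3: "\<forall>x\<in>carrier G. \<forall>y\<in>carrier G. \<forall>z\<in>carrier G. leq x y \<and> leq y z \<longrightarrow> leq x z"
  using RL unfolding right_lgroup_def by (elim conjE) assumption
lemma RLc4: "\<forall>x\<in>carrier G. \<forall>y\<in>carrier G. \<forall>z\<in>carrier G. leq x y \<longrightarrow> leq (x \<otimes> z) (y \<otimes> z)"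
  using RL unfolding right_lgroup_def by (elim conjE) assumption
lemma RLc5: "\<forall>x\<in>carrier G. \<forall>y\<in>carrier G. (\<exists>z. is_join G leq x y z) \<and> (\<exists>z. is_meet G leq x y z)"
  using RL unfolding right_lgroup_def by (elim conjE) assumption
lemmas RLc = RLc1 RLc2 RLc3 RLc4 RLc5

lemma lrefl: "x \<in> carrier G \<Longrightarrow> leq x x"
  using RLc(1) by blast
lemma lantisym: "x \<in> carrier G \<Longrightarrow> y \<in> carrier G \<Longrightarrow> leq x y \<Longrightarrow> leq y x \<Longrightarrow> x = y"
  using RLc(2) by blast
lemma ltrans: "x \<in> carrier G \<Longrightarrow> y \<in> carrier G \<Longrightarrow> z \<in> carrier G \<Longrightarrow> leq x y \<Longrightarrow> leq y z \<Longrightarrow> leq x z"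
  using RLc(3) by blast
lemma rmono: "x \<in> carrier G \<Longrightarrow> y \<in> carrier G \<Longrightarrow> z \<in> carrier G \<Longrightarrow> leq x y \<Longrightarrow> leq (x \<otimes> z) (y \<otimes> z)"
  using RLc(4) by blast
lemma rmono_iff: assumes "x \<in> carrier G" "y \<in> carrier G" "z \<in> carrier G"
  shows "leq (x \<otimes> z) (y \<otimes> z) \<longleftrightarrow> leq x y"
proof
  assume "leq (x \<otimes> z) (y \<otimes> z)"
  then have "leq (x \<otimes> z \<otimes> inv z) (y \<otimes> z \<otimes> inv z)" using rmono assms by simp
  then show "leq x y" using assms by (simp add: m_assoc)
qed (use rmono assms in blast)

lemma join_ex: assumes "x \<in> carrier G" "y \<in> carrier G"
  shows "is_join G leq x y (jn x y)"
proof -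
  have "\<exists>z. is_join G leq x y z" using bspec[OF bspec[OF RLc5 assms(1)] assms(2)] by (rule conjunct1)
  then obtain z where z: "is_join G leq x y z" by (elim exE)
  have u: "z' = z" if "is_join G leq x y z'" for z'
  proof -
    have a: "z' \<in> carrier G" "z \<in> carrier G" using that z unfolding is_join_def by auto
    have "leq z' z" using that z a unfolding is_join_def by blast
    moreover have "leq z z'" using that z a unfolding is_join_def by blast
    ultimately show ?thesis using lantisym a by blast
  qed
  show ?thesis unfolding ljoin_def using theI[of "is_join G leq x y" z, OF z u] by blast
qed

lemma meet_ex: assumes "x \<in> carrier G" "y \<in> carrier G"
  shows "is_meet G leq x y (mt x y)"
proof -
  have "\<exists>z. is_meet G leq x y z" using bspec[OF bspec[OF RLc5 assms(1)] assms(2)] by (rule conjunct2)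
  then obtain z where z: "is_meet G leq x y z" by (elim exE)
  have u: "z' = z" if "is_meet G leq x y z'" for z'
  proof -
    have a: "z' \<in> carrier G" "z \<in> carrier G" using that z unfolding is_meet_def by auto
    have "leq z' z" using that z a unfolding is_meet_def by blast
    moreover have "leq z z'" using that z a unfolding is_meet_def by blast
    ultimately show ?thesis using lantisym a by blast
  qed
  show ?thesis unfolding lmeet_def using theI[of "is_meet G leq x y" z, OF z u] by blast
qed

lemma join_unique: "x \<in> carrier G \<Longrightarrow> y \<in> carrier G \<Longrightarrow> is_join G leq x y z \<Longrightarrow> jn x y = z"
  using join_ex lantisym unfolding is_join_def by blast
lemma meet_unique: "x \<in> carrier G \<Longrightarrow> y \<in> carrier G \<Longrightarrow> is_meet G leq x y z \<Longrightarrow> mt x y = z"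
  using meet_ex lantisym unfolding is_meet_def by blast

lemma jn_closed: "x \<in> carrier G \<Longrightarrow> y \<in> carrier G \<Longrightarrow> jn x y \<in> carrier G"
  using join_ex unfolding is_join_def by blast
lemma jn_ub1: "x \<in> carrier G \<Longrightarrow> y \<in> carrier G \<Longrightarrow> leq x (jn x y)"
  using join_ex unfolding is_join_def by blast
lemma jn_ub2: "x \<in> carrier G \<Longrightarrow> y \<in> carrier G \<Longrightarrow> leq y (jn x y)"
  using join_ex unfolding is_join_def by blast
lemma jn_least: "x \<in> carrier G \<Longrightarrow> y \<in> carrier G \<Longrightarrow> w \<in> carrier G \<Longrightarrow> leq x w \<Longrightarrow> leq y w \<Longrightarrow> leq (jn x y) w"
  using join_ex unfolding is_join_def by blast
lemma mt_closed: "x \<in> carrier G \<Longrightarrow> y \<in> carrier G \<Longrightarrow> mt x y \<in> carrier G"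
  using meet_ex unfolding is_meet_def by blast
lemma mt_lb1: "x \<in> carrier G \<Longrightarrow> y \<in> carrier G \<Longrightarrow> leq (mt x y) x"
  using meet_ex unfolding is_meet_def by blast
lemma mt_lb2: "x \<in> carrier G \<Longrightarrow> y \<in> carrier G \<Longrightarrow> leq (mt x y) y"
  using meet_ex unfolding is_meet_def by blast
lemma mt_greatest: "x \<in> carrier G \<Longrightarrow> y \<in> carrier G \<Longrightarrow> w \<in> carrier G \<Longrightarrow> leq w x \<Longrightarrow> leq w y \<Longrightarrow> leq w (mt x y)"
  using meet_ex unfolding is_meet_def by blast

lemma jn_comm: "x \<in> carrier G \<Longrightarrow> y \<in> carrier G \<Longrightarrow> jn x y = jn y x"
  by (rule join_unique) (use join_ex in \<open>auto simp: is_join_def\<close>)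
lemma mt_comm: "x \<in> carrier G \<Longrightarrow> y \<in> carrier G \<Longrightarrow> mt x y = mt y x"
  by (rule meet_unique) (use meet_ex in \<open>auto simp: is_meet_def\<close>)
lemma jn_absorb: "x \<in> carrier G \<Longrightarrow> y \<in> carrier G \<Longrightarrow> leq x y \<Longrightarrow> jn x y = y"
  by (rule join_unique) (auto simp: is_join_def lrefl)
lemma mt_absorb: "x \<in> carrier G \<Longrightarrow> y \<in> carrier G \<Longrightarrow> leq x y \<Longrightarrow> mt x y = x"
  by (rule meet_unique) (auto simp: is_meet_def lrefl)


lemma lt_rmult: "x \<in> carrier G \<Longrightarrow> y \<in> carrier G \<Longrightarrow> z \<in> carrier G \<Longrightarrow> lt x y \<Longrightarrow> lt (x \<otimes> z) (y \<otimes> z)"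
  unfolding lt_rel_def using rmono by auto

end

locale rlg2 = rlg +
  fixes deg :: "'a \<Rightarrow> int"
  assumes MOD: "modular_lgroup G leq" and NOE: "noetherian_lgroup G leq"
    and DEG: "is_degree G leq deg"

context rlg2 begin

lemma exists_cover_below:
  assumes w: "w \<in> carrier G" and c: "c \<in> carrier G" and wc: "leq w c" "w \<noteq> c"
  shows "\<exists>u\<in>carrier G. leq w u \<and> covered_by G leq u c"
proof -
  have nc: "\<not>(\<exists>f::nat \<Rightarrow> 'a. \<forall>n. f n \<in> {z\<in>carrier G. leq z c} \<and> lt (f n) (f (Suc n)))"
    using bspec[OF NOE[unfolded noetherian_lgroup_def] c] by simp
  let ?T = "{z\<in>carrier G. leq w z \<and> lt z c}"
  have "w \<in> ?T" using w wc lrefl by (auto simp: lt_rel_def)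
  then obtain m where m: "m \<in> ?T" and mx: "\<forall>z\<in>?T. \<not> lt m z"
    using exists_max[OF nc, of ?T] unfolding lt_rel_def by blast
  have "covered_by G leq m c"
    unfolding covered_by_def
  proof (intro conjI)
    show "\<not> (\<exists>z\<in>carrier G. lt m z \<and> lt z c)"
    proof
      assume "\<exists>z\<in>carrier G. lt m z \<and> lt z c"
      then obtain z where z: "z \<in> carrier G" "lt m z" "lt z c" by blast
      then have "leq w z" using m w ltrans unfolding lt_rel_def by blast
      then show False using z mx by blast
    qed
  qed (use m c in auto)
  then show ?thesis using m by blast
qed

lemma dcc_induct:
  assumes w: "w \<in> carrier G" and c: "c \<in> carrier G" "leq w c"
    and step: "\<And>c. c \<in> carrier G \<Longrightarrow> leq w c \<Longrightarrow> (\<And>c'. c' \<in> carrier G \<Longrightarrow> leq w c' \<Longrightarrow> lt c' c \<Longrightarrow> P c') \<Longrightarrow> P c"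
  shows "P c"
proof -
  have nc0: "\<not> (\<exists>f :: nat \<Rightarrow> 'a. \<forall>n. f n \<in> carrier G \<and> leq w (f n) \<and> lt (f (Suc n)) (f n))"
    using bspec[OF NOE[unfolded noetherian_lgroup_def] w] by (rule conjunct1)
  have nc: "\<not>(\<exists>f::nat \<Rightarrow> 'a. \<forall>n. f n \<in> {z\<in>carrier G. leq w z} \<and> lt (f (Suc n)) (f n))"
    using nc0 by simp
  show ?thesis
  proof (rule chain_induct[OF nc, where P=P and x=c])
    fix x assume x: "x \<in> {z\<in>carrier G. leq w z}"
      and IH: "\<And>y. y \<in> {z\<in>carrier G. leq w z} \<Longrightarrow> lt y x \<Longrightarrow> P y"
    from x have x1: "x \<in> carrier G" and x2: "leq w x" by auto
    show "P x"
    proof (rule step[OF x1 x2])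
      fix c' assume "c' \<in> carrier G" "leq w c'" "lt c' x"
      then show "P c'" using IH[of c'] by simp
    qed
  next
    show "c \<in> {z\<in>carrier G. leq w z}" using c by simp
  qed
qed

lemma deg_mult0: "\<forall>x\<in>carrier G. \<forall>y\<in>carrier G. deg (x \<otimes> y) = deg x + deg y"
  using DEG unfolding is_degree_def by (elim conjE) assumption

lemma deg_mult: "x \<in> carrier G \<Longrightarrow> y \<in> carrier G \<Longrightarrow> deg (x \<otimes> y) = deg x + deg y"
  using deg_mult0 by blast

lemma deg_one: "deg \<one> = 0"
  using deg_mult[of \<one> \<one>] by simp

lemma deg_inv: "x \<in> carrier G \<Longrightarrow> deg (inv x) = - deg x"
  using deg_mult[of x "inv x"] deg_one by simp

lemma deg_cover:
  assumes cov: "covered_by G leq u c"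
  shows "deg u = deg c + 1"
proof -
  have u: "u \<in> carrier G" and c: "c \<in> carrier G" and uc: "lt u c"
    and nb: "\<not> (\<exists>z\<in>carrier G. lt u z \<and> lt z c)"
    using cov unfolding covered_by_def by auto
  let ?t = "u \<otimes> inv c"
  have t: "?t \<in> carrier G" using u c by simp
  have tc: "?t \<otimes> c = u" using u c by (simp add: m_assoc)
  have "lt ?t \<one>"
    using lt_rmult[OF u c _ uc, of "inv c"] c by simp
  moreover have "\<not> (\<exists>z\<in>carrier G. lt ?t z \<and> lt z \<one>)"
  proof
    assume "\<exists>z\<in>carrier G. lt ?t z \<and> lt z \<one>"
    then obtain z where z: "z \<in> carrier G" "lt ?t z" "lt z \<one>" by blast
    have "lt u (z \<otimes> c)" using lt_rmult[OF t z(1) c z(2)] tc by simp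
    moreover have "lt (z \<otimes> c) c" using lt_rmult[OF z(1) one_closed c z(3)] c by simp
    ultimately show False using nb z c by blast
  qed
  ultimately have covt: "covered_by G leq ?t \<one>" using t unfolding covered_by_def by auto
  have negt: "?t \<in> neg_cone G leq" using \<open>lt ?t \<one>\<close> t
    unfolding neg_cone_def lt_rel_def by auto
  have lpt: "lprod G [?t] = ?t" using t unfolding lprod_def by simp
  have H: "\<forall>g\<in>neg_cone G leq. \<forall>as. (\<forall>a\<in>set as. covered_by G leq a \<one>) \<and> lprod G as = g
        \<longrightarrow> deg g = int (length as)" using DEG unfolding is_degree_def by (elim conjE) assumption
  have c1: "\<forall>a\<in>set [?t]. covered_by G leq a \<one>" using covt by simp
  have "deg ?t = int (length [?t])"
    by (rule mp[OF spec[OF bspec[OF H negt], of "[?t]"] conjI[OF c1 lpt]])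
  then have "deg ?t = 1" by simp
  then show ?thesis using deg_mult[OF t c] tc by simp
qed

lemma deg_strict:
  assumes w: "w \<in> carrier G" and c: "c \<in> carrier G" and wc: "leq w c" "w \<noteq> c"
  shows "deg c < deg w"
proof -
  have "w \<noteq> c \<longrightarrow> deg c < deg w"
  proof (rule dcc_induct[OF w c wc(1)])
    fix c assume c: "c \<in> carrier G" and wc: "leq w c"
      and IH: "\<And>c'. c' \<in> carrier G \<Longrightarrow> leq w c' \<Longrightarrow> lt c' c \<Longrightarrow> w \<noteq> c' \<longrightarrow> deg c' < deg w"
    show "w \<noteq> c \<longrightarrow> deg c < deg w"
    proof
      assume ne: "w \<noteq> c"
      obtain u where u: "u \<in> carrier G" "leq w u" "covered_by G leq u c"
        using exists_cover_below[OF w c wc ne] by blast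
      have "deg u = deg c + 1" using deg_cover[OF u(3)] .
      moreover have "deg u \<le> deg w"
      proof (cases "w = u")
        case False
        then show ?thesis using IH[OF u(1) u(2)] u(3) unfolding covered_by_def by force
      qed simp
      ultimately show "deg c < deg w" by simp
    qed
  qed
  then show ?thesis using wc by blast
qed


lemma modlaw: assumes "x \<in> carrier G" "y \<in> carrier G" "z \<in> carrier G" "leq x z"
  shows "jn x (mt y z) = mt (jn x y) z"
proof -
  have M: "\<forall>x\<in>carrier G. \<forall>y\<in>carrier G. \<forall>z\<in>carrier G. leq x z \<longrightarrow>
        jn x (mt y z) = mt (jn x y) z" using MOD unfolding modular_lgroup_def .
  show ?thesis using bspec[OF bspec[OF bspec[OF M assms(1)] assms(2)] assms(3)] assms(4) by (rule mp)
qed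

lemma meet_back: assumes x: "x \<in> carrier G" and y: "y \<in> carrier G" and u: "u \<in> carrier G"
  and mu: "leq (mt x y) u" and ux: "leq u x"
  shows "mt (jn u y) x = u"
proof -
  have "jn u (mt y x) = mt (jn u y) x" using modlaw[OF u y x ux] .
  moreover have "mt y x = mt x y" using mt_comm x y by simp
  moreover have "jn u (mt x y) = u"
    using jn_comm[OF u mt_closed[OF x y]] jn_absorb[OF mt_closed[OF x y] u mu] by simp
  ultimately show ?thesis by simp
qed

lemma join_back: assumes x: "x \<in> carrier G" and y: "y \<in> carrier G" and z: "z \<in> carrier G"
  and yz: "leq y z" and zj: "leq z (jn x y)"
  shows "jn (mt z x) y = z"
proof -
  have "jn y (mt x z) = mt (jn y x) z" using modlaw[OF y x z yz] .
  moreover have "jn y x = jn x y" using jn_comm x y by simp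
  moreover have "mt (jn x y) z = z"
    using mt_comm[OF jn_closed[OF x y] z] mt_absorb[OF z jn_closed[OF x y] zj] by simp
  moreover have "jn y (mt x z) = jn (mt z x) y"
    using jn_comm[OF y mt_closed[OF x z]] mt_comm[OF x z] by simp
  ultimately show ?thesis by simp
qed

lemma cover_pres:
  assumes x: "x \<in> carrier G" and y: "y \<in> carrier G"
    and mu: "leq (mt x y) u" and cov: "covered_by G leq u c" and cx: "leq c x"
  shows "covered_by G leq (jn u y) (jn c y)"
proof -
  have u: "u \<in> carrier G" and c: "c \<in> carrier G" and uc: "leq u c" "u \<noteq> c"
    and nb: "\<not> (\<exists>z\<in>carrier G. lt u z \<and> lt z c)"
    using cov unfolding covered_by_def lt_rel_def by auto
  have m: "mt x y \<in> carrier G" using mt_closed x y by simp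
  have ux: "leq u x" using ltrans[OF u c x uc(1) cx] .
  have mc: "leq (mt x y) c" using ltrans[OF m u c mu uc(1)] .
  have ju: "jn u y \<in> carrier G" and jc: "jn c y \<in> carrier G" using jn_closed u c y by auto
  have A: "leq (jn u y) (jn c y)"
    using jn_least[OF u y jc ltrans[OF u c jc uc(1) jn_ub1[OF c y]] jn_ub2[OF c y]] .
  have bu: "mt (jn u y) x = u" using meet_back[OF x y u mu ux] .
  have bc: "mt (jn c y) x = c" using meet_back[OF x y c mc cx] .
  have B: "jn u y \<noteq> jn c y" using bu bc uc(2) by metis
  have C: "\<not> (\<exists>z\<in>carrier G. lt (jn u y) z \<and> lt z (jn c y))"
  proof
    assume "\<exists>z\<in>carrier G. lt (jn u y) z \<and> lt z (jn c y)"
    then obtain z where z: "z \<in> carrier G" and z1: "leq (jn u y) z" "jn u y \<noteq> z"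
      and z2: "leq z (jn c y)" "z \<noteq> jn c y" unfolding lt_rel_def by blast
    define z' where "z' = mt z x"
    have z'c: "z' \<in> carrier G" using z x mt_closed z'_def by simp
    have uz: "leq u z" using ltrans[OF u ju z jn_ub1[OF u y] z1(1)] .
    have uz': "leq u z'" unfolding z'_def using mt_greatest[OF z x u uz ux] .
    have z'z: "leq z' z" unfolding z'_def using mt_lb1[OF z x] .
    have "leq z' (jn c y)" using ltrans[OF z'c z jc z'z z2(1)] .
    then have "leq z' (mt (jn c y) x)"
      using mt_greatest[OF jc x z'c] mt_lb2[OF z x] unfolding z'_def by simp
    then have z'c2: "leq z' c" using bc by simp
    have yz: "leq y z" using ltrans[OF y ju z jn_ub2[OF u y] z1(1)] .
    have jcx: "leq (jn c y) (jn x y)"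
      using jn_least[OF c y jn_closed[OF x y] ltrans[OF c x jn_closed[OF x y] cx jn_ub1[OF x y]] jn_ub2[OF x y]] .
    have zjx: "leq z (jn x y)" using ltrans[OF z jc jn_closed[OF x y] z2(1) jcx] .
    have jb: "jn z' y = z" unfolding z'_def using join_back[OF x y z yz zjx] .
    show False
    proof (cases "z' = u")
      case True then show False using jb z1(2) by simp
    next
      case False
      show False
      proof (cases "z' = c")
        case True then show False using jb z2(2) by simp
      next
        case False
        then have "lt u z' \<and> lt z' c" using \<open>z' \<noteq> u\<close> uz' z'c2 unfolding lt_rel_def by metis
        then show False using nb z'c by blast
      qed
    qed
  qed
  show ?thesis unfolding covered_by_def lt_rel_def using ju jc A B C unfolding lt_rel_def by blast
qed

lemma deg_modular:
  assumes x: "x \<in> carrier G" and y: "y \<in> carrier G"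
  shows "deg x - deg (mt x y) = deg (jn x y) - deg y"
proof -
  let ?m = "mt x y"
  have m: "?m \<in> carrier G" using mt_closed x y by simp
  have "leq x x \<longrightarrow> deg x - deg ?m = deg (jn x y) - deg y"
  proof (rule dcc_induct[where P="\<lambda>c. leq c x \<longrightarrow> deg c - deg ?m = deg (jn c y) - deg y", OF m x mt_lb1[OF x y]])
    fix c assume c: "c \<in> carrier G" and mc: "leq ?m c"
      and IH: "\<And>c'. c' \<in> carrier G \<Longrightarrow> leq ?m c' \<Longrightarrow> lt c' c \<Longrightarrow>
                leq c' x \<longrightarrow> deg c' - deg ?m = deg (jn c' y) - deg y"
    show "leq c x \<longrightarrow> deg c - deg ?m = deg (jn c y) - deg y"
    proof
      assume cx: "leq c x"
      show "deg c - deg ?m = deg (jn c y) - deg y"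
      proof (cases "c = ?m")
        case True
        then have "jn c y = y" using jn_absorb[OF c y] mt_lb2[OF x y] by simp
        then show ?thesis using True by simp
      next
        case False
        then obtain u where u: "u \<in> carrier G" "leq ?m u" "covered_by G leq u c"
          using exists_cover_below[OF m c mc] by metis
        have uc: "lt u c" using u(3) unfolding covered_by_def by blast
        have ux: "leq u x" using ltrans[OF u(1) c x _ cx] uc unfolding lt_rel_def by blast
        have ih: "deg u - deg ?m = deg (jn u y) - deg y" using IH[OF u(1) u(2) uc] ux by blast
        have d1: "deg u = deg c + 1" using deg_cover[OF u(3)] .
        have d2: "deg (jn u y) = deg (jn c y) + 1"
          using deg_cover[OF cover_pres[OF x y u(2) u(3) cx]] .
        show ?thesis using ih d1 d2 by simp
      qed
    qed
  qed
  then show ?thesis using lrefl[OF x] by blast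
qed


lemma smono: assumes S: "strong_order_unit G leq s" and u: "u \<in> carrier G" and v: "v \<in> carrier G"
  and uv: "leq u v" shows "leq (s \<otimes> u) (s \<otimes> v)"
proof -
  have sc: "s \<in> carrier G" using S unfolding strong_order_unit_def by blast
  have J: "\<forall>x\<in>carrier G. \<forall>y\<in>carrier G.
        s \<otimes> jn x y = jn (s \<otimes> x) (s \<otimes> y) \<and> s \<otimes> mt x y = mt (s \<otimes> x) (s \<otimes> y)"
    using S unfolding strong_order_unit_def by (elim conjE) assumption
  have "s \<otimes> jn u v = jn (s \<otimes> u) (s \<otimes> v)" using bspec[OF bspec[OF J u] v] by (rule conjunct1)
  then have "s \<otimes> v = jn (s \<otimes> u) (s \<otimes> v)" using jn_absorb[OF u v uv] by simp
  then show ?thesis using jn_ub1[of "s \<otimes> u" "s \<otimes> v"] sc u v by simp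
qed

lemma sinvmono: assumes S: "strong_order_unit G leq s" and u: "u \<in> carrier G" and v: "v \<in> carrier G"
  and uv: "leq u v" shows "leq (inv s \<otimes> u) (inv s \<otimes> v)"
proof -
  have sc: "s \<in> carrier G" using S unfolding strong_order_unit_def by blast
  have J: "\<forall>x\<in>carrier G. \<forall>y\<in>carrier G.
        s \<otimes> jn x y = jn (s \<otimes> x) (s \<otimes> y) \<and> s \<otimes> mt x y = mt (s \<otimes> x) (s \<otimes> y)"
    using S unfolding strong_order_unit_def by (elim conjE) assumption
  let ?u = "inv s \<otimes> u" and ?v = "inv s \<otimes> v"
  have uc: "?u \<in> carrier G" and vc: "?v \<in> carrier G" using sc u v by auto
  have su: "s \<otimes> ?u = u" and sv: "s \<otimes> ?v = v" using sc u v by (simp_all add: m_assoc[symmetric])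
  have "s \<otimes> jn ?u ?v = jn (s \<otimes> ?u) (s \<otimes> ?v)" using bspec[OF bspec[OF J uc] vc] by (rule conjunct1)
  then have "s \<otimes> jn ?u ?v = s \<otimes> ?v" using su sv jn_absorb[OF u v uv] by simp
  then have "jn ?u ?v = ?v" using sc uc vc jn_closed[OF uc vc] by simp
  then show ?thesis using jn_ub1[OF uc vc] by simp
qed

lemma key:
  assumes S: "strong_order_unit G leq s"
    and a: "a \<in> interval G leq (inv s) \<one> - {\<one>}" and b: "b \<in> interval G leq (inv s) \<one> - {\<one>}"
    and dab: "deg a = deg b"
    and rn: "\<not> (\<exists>h\<in>neg_cone G leq. \<exists>h'\<in>neg_cone G leq. h \<noteq> \<one> \<and>
             h' \<otimes> h = b \<and> h \<otimes> a \<in> interval G leq (inv s) \<one>)"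
  shows "\<not> (\<exists>h\<in>neg_cone G leq. \<exists>h'\<in>neg_cone G leq. h \<noteq> \<one> \<and>
             h \<otimes> h' = a \<and> b \<otimes> h \<in> interval G leq (inv s) \<one>)"
proof
  assume "\<exists>h\<in>neg_cone G leq. \<exists>h'\<in>neg_cone G leq. h \<noteq> \<one> \<and>
             h \<otimes> h' = a \<and> b \<otimes> h \<in> interval G leq (inv s) \<one>"
  then obtain h h' where h: "h \<in> carrier G" "leq h \<one>" and h': "h' \<in> carrier G" "leq h' \<one>"
    and hne: "h \<noteq> \<one>" and hh: "h \<otimes> h' = a" and bh: "leq (inv s) (b \<otimes> h)"
    unfolding neg_cone_def interval_def by blast
  have sc: "s \<in> carrier G" using S unfolding strong_order_unit_def by blast
  define D where "D = inv s"
  have Dc: "D \<in> carrier G" using sc D_def by simp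
  have ac: "a \<in> carrier G" and Da: "leq D a" and a1: "leq a \<one>"
    using a unfolding interval_def D_def by auto
  have bc: "b \<in> carrier G" and Db: "leq D b" and b1: "leq b \<one>"
    using b unfolding interval_def D_def by auto
  define x where "x = D \<otimes> inv a"
  have xc: "x \<in> carrier G" using Dc ac x_def by simp
  have xa: "x \<otimes> a = D" using Dc ac unfolding x_def by (simp add: m_assoc)
  have x1: "leq x \<one>" using rmono_iff[OF xc one_closed ac] xa ac Da by simp
  have "leq (D \<otimes> a) D" using sinvmono[OF S ac one_closed a1] Dc D_def by simp
  then have "leq (D \<otimes> a \<otimes> inv a) (D \<otimes> inv a)" using rmono[of "D \<otimes> a" D "inv a"] Dc ac by simp
  then have Dx: "leq D x" using Dc ac unfolding x_def by (simp add: m_assoc)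
  define J where "J = jn x b"
  have Jc: "J \<in> carrier G" using jn_closed xc bc J_def by simp
  have J1: "leq J \<one>" using jn_least[OF xc bc one_closed x1 b1] J_def by simp
  have J_eq: "J = \<one>"
  proof (rule ccontr)
    assume ne: "J \<noteq> \<one>"
    have hn: "J \<in> neg_cone G leq" using Jc J1 unfolding neg_cone_def by simp
    have bJ: "leq b J" using jn_ub2[OF xc bc] J_def by simp
    have "leq (b \<otimes> inv J) (J \<otimes> inv J)" using rmono[OF bc Jc inv_closed[OF Jc] bJ] .
    then have h'n: "b \<otimes> inv J \<in> neg_cone G leq" using bc Jc unfolding neg_cone_def by simp
    have prod: "b \<otimes> inv J \<otimes> J = b" using bc Jc by (simp add: m_assoc)
    have xJ: "leq x J" using jn_ub1[OF xc bc] J_def by simp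
    have "leq (x \<otimes> a) (J \<otimes> a)" using rmono[OF xc Jc ac xJ] .
    then have lo: "leq (inv s) (J \<otimes> a)" using xa D_def by simp
    have "leq (J \<otimes> a) (\<one> \<otimes> a)" using rmono[OF Jc one_closed ac J1] .
    then have hi: "leq (J \<otimes> a) \<one>" using ltrans[OF _ ac one_closed _ a1] Jc ac by simp
    have "J \<otimes> a \<in> interval G leq (inv s) \<one>" using lo hi Jc ac unfolding interval_def by simp
    then show False using rn hn h'n ne prod by blast
  qed
  define m where "m = mt x b"
  have mc: "m \<in> carrier G" using mt_closed xc bc m_def by simp
  have dm: "deg x - deg m = deg J - deg b" using deg_modular[OF xc bc] m_def J_def by simp
  have dx: "deg x = deg D - deg a" using deg_mult[OF Dc inv_closed[OF ac]] deg_inv[OF ac] x_def by simp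
  have degm: "deg m = deg D" using dm dx J_eq deg_one dab by simp
  have Dm: "leq D m" using mt_greatest[OF xc bc Dc Dx Db] m_def by simp
  have mD: "m = D"
  proof (rule ccontr)
    assume "m \<noteq> D"
    then have "deg m < deg D" using deg_strict[OF Dc mc Dm] by simp
    then show False using degm by simp
  qed
  define w where "w = D \<otimes> inv h"
  have wc: "w \<in> carrier G" using Dc h w_def by simp
  have "leq (D \<otimes> inv h) (b \<otimes> h \<otimes> inv h)" using rmono[OF Dc _ inv_closed[OF h(1)] bh[folded D_def]] bc h by simp
  then have wb: "leq w b" using bc h unfolding w_def by (simp add: m_assoc)
  have "leq (D \<otimes> h') D" using sinvmono[OF S h'(1) one_closed h'(2)] D_def sc by simp
  then have "leq (D \<otimes> h' \<otimes> inv h') (D \<otimes> inv h')" using rmono[of "D \<otimes> h'" D "inv h'"] Dc h' by simp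
  then have "leq D (D \<otimes> inv h')" using Dc h' by (simp add: m_assoc)
  then have "leq (D \<otimes> inv h) (D \<otimes> inv h' \<otimes> inv h)" using rmono[of D "D \<otimes> inv h'" "inv h"] Dc h h' by simp
  moreover have "x = D \<otimes> inv h' \<otimes> inv h"
    unfolding x_def using hh[symmetric] Dc h h' by (simp add: inv_mult_group m_assoc)
  ultimately have wx: "leq w x" unfolding w_def by simp
  have "leq w m" using mt_greatest[OF xc bc wc wx wb] m_def by simp
  then have "leq (D \<otimes> inv h) D" using mD w_def by simp
  then have "leq (D \<otimes> inv h \<otimes> h) (D \<otimes> h)" using rmono[of "D \<otimes> inv h" D h] Dc h by simp
  then have "leq D (D \<otimes> h)" using Dc h by (simp add: m_assoc)
  then have "leq (s \<otimes> D) (s \<otimes> (D \<otimes> h))" using smono[OF S Dc _] Dc h by simp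
  then have "leq \<one> h" using sc h D_def by (simp add: m_assoc[symmetric])
  then have "h = \<one>" using lantisym[OF h(1) one_closed h(2)] by simp
  then show False using hne by simp
qed

end

theorem mainTheorem7:
  fixes G :: "('a, 'b) monoid_scheme" and leq :: "'a \<Rightarrow> 'a \<Rightarrow> bool"
    and s g :: 'a and deg :: "'a \<Rightarrow> int" and d :: int and gs :: "'a list"
  assumes "right_lgroup G leq" and "modular_lgroup G leq" and "noetherian_lgroup G leq"
    and "strong_order_unit G leq s" and "is_degree G leq deg"
    and "d \<ge> 1" and "g \<in> neg_cone G leq"
    and "homogeneous G leq s deg d g"
    and "right_normal G leq s g gs"
  shows "left_normal G leq s g (rev gs)"
proof -
  interpret rlg2 G leq deg
    using assms(1,2,3,5) by (simp add: rlg_def rlg2_def rlg2_axioms_def)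
  have rn: "right_normal G leq s g gs" by (fact assms(9))
  have elts: "\<forall>x\<in>set gs. x \<in> interval G leq (inv\<^bsub>G\<^esub> s) \<one>\<^bsub>G\<^esub> - {\<one>\<^bsub>G\<^esub>}"
    using rn unfolding right_normal_def by blast
  have gprod: "g = lprod G (rev gs)" using rn unfolding right_normal_def by blast
  have rcond: "\<And>j. Suc j < length gs \<Longrightarrow>
        \<not> (\<exists>h\<in>neg_cone G leq. \<exists>h'\<in>neg_cone G leq. h \<noteq> \<one>\<^bsub>G\<^esub> \<and>
             h' \<otimes>\<^bsub>G\<^esub> h = gs ! Suc j \<and>
             h \<otimes>\<^bsub>G\<^esub> (gs ! j) \<in> interval G leq (inv\<^bsub>G\<^esub> s) \<one>\<^bsub>G\<^esub>)"
    using rn unfolding right_normal_def by blast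
  have degs: "\<forall>x\<in>set gs. deg x = d" using assms(8) rn unfolding homogeneous_def by blast
  show ?thesis
    unfolding left_normal_def
  proof (intro conjI allI impI)
    show "\<forall>x\<in>set (rev gs). x \<in> interval G leq (inv\<^bsub>G\<^esub> s) \<one>\<^bsub>G\<^esub> - {\<one>\<^bsub>G\<^esub>}"
      using elts by simp
    show "g = lprod G (rev gs)" by (fact gprod)
  next
    fix i assume i: "Suc i < length (rev gs)"
    define k where "k = length gs"
    define j where "j = k - 2 - i"
    have jk: "Suc j < k" using i unfolding j_def k_def by simp
    have e1: "rev gs ! i = gs ! Suc j" using i rev_nth[of i gs] unfolding j_def k_def
      by (simp add: Suc_diff_Suc numeral_2_eq_2)
    have e2: "rev gs ! Suc i = gs ! j" using i rev_nth[of "Suc i" gs] unfolding j_def k_def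
      by (simp add: numeral_2_eq_2)
    have a: "gs ! j \<in> interval G leq (inv\<^bsub>G\<^esub> s) \<one>\<^bsub>G\<^esub> - {\<one>\<^bsub>G\<^esub>}"
      using elts jk k_def by simp
    have b: "gs ! Suc j \<in> interval G leq (inv\<^bsub>G\<^esub> s) \<one>\<^bsub>G\<^esub> - {\<one>\<^bsub>G\<^esub>}"
      using elts jk k_def by simp
    have dab: "deg (gs ! j) = deg (gs ! Suc j)" using degs jk k_def by simp
    show "\<not> (\<exists>h\<in>neg_cone G leq. \<exists>h'\<in>neg_cone G leq. h \<noteq> \<one>\<^bsub>G\<^esub> \<and>
             h \<otimes>\<^bsub>G\<^esub> h' = rev gs ! Suc i \<and>
             (rev gs ! i) \<otimes>\<^bsub>G\<^esub> h \<in> interval G leq (inv\<^bsub>G\<^esub> s) \<one>\<^bsub>G\<^esub>)"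
      unfolding e1 e2 using key[OF assms(4) a b dab rcond[OF jk[unfolded k_def]]] .
  qed
qed

end
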